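(* Fix $\vartheta_1\in(0,\pi/2)$ and $\varphi_1\in[0,\pi]$. If $\eta<\eta'$ are two points of $I=\bigcup_{k\ge0}I_k$ with $\Phi(\eta)=\Phi(\eta')=\varphi_1$, then $S(\eta)<S(\eta')$, where $S(\eta)=\sin\vartheta_1\,\eta/|\sin\eta|$.
   Context: For integers $k\ge0$ let $I_k=[\vartheta_1+k\pi,(k+1)\pi-\vartheta_1]$. For $\eta\in I_k$ set $\gamma(\eta)=\sqrt{1-\sin^2\vartheta_1/\sin^2\eta}$ and $$\Phi(\eta)=-\eta\,\gamma(\eta)+k\pi+\arccos\Big(\frac{\cos(\eta-k\pi)}{\cos\vartheta_1}\Big),\qquad\arccos\in[0,\pi].$$ (In the paper the solutions of $\Phi(\eta)=\varphi_1$ parametrize CR-geodesics from $(1,0,\dots,0)$ to points with $z_1=\cos\vartheta_1e^{i\varphi_1}$, and $S(\eta)$ is the corresponding geodesic length.) *)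

theory Defs
  imports Complex_Main
begin

definition Ik :: "real \<Rightarrow> nat \<Rightarrow> real set" where
  "Ik th1 k = {th1 + real k * pi .. real (k+1) * pi - th1}"

definition Iall :: "real \<Rightarrow> real set" where
  "Iall th1 = (\<Union>k. Ik th1 k)"

text \<open>The index k with eta in I_k (unique since the I_k are disjoint for th1 > 0).\<close>
definition idx :: "real \<Rightarrow> real \<Rightarrow> nat" where
  "idx th1 eta = (THE k. eta \<in> Ik th1 k)"

definition gam :: "real \<Rightarrow> real \<Rightarrow> real" where
  "gam th1 eta = sqrt (1 - (sin th1)\<^sup>2 / (sin eta)\<^sup>2)"

definition Phi :: "real \<Rightarrow> real \<Rightarrow> real" where
  "Phi th1 eta = (let k = idx th1 eta in
     - eta * gam th1 eta + real k * pi + arccos (cos (eta - real k * pi) / cos th1))"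

definition S :: "real \<Rightarrow> real \<Rightarrow> real" where
  "S th1 eta = sin th1 * eta / \<bar>sin eta\<bar>"

end

theory Submission imports Defs begin

definition ps :: "real \<Rightarrow> real \<Rightarrow> real" where "ps th1 t = arccos (cos t / cos th1)"
definition rr :: "real \<Rightarrow> real \<Rightarrow> real" where "rr th1 t = sqrt ((sin t)^2 - (sin th1)^2)"
definition F :: "real \<Rightarrow> nat \<Rightarrow> real \<Rightarrow> real" where
  "F th1 k t = - (t + real k * pi) * gam th1 t + real k * pi + ps th1 t"
definition G :: "real \<Rightarrow> nat \<Rightarrow> real \<Rightarrow> real \<Rightarrow> real" where
  "G th1 k phi t = (t + real k * pi)^2 - (real k * pi + ps th1 t - phi)^2"
definition SS :: "real \<Rightarrow> nat \<Rightarrow> real \<Rightarrow> real" where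
  "SS th1 k t = sin th1 * (t + real k * pi) / sin t"

lemma power4_eq_xxxx: "(x::real)^4 = x*(x*(x*x))" by (simp add: eval_nat_numeral)
lemma alg0: "inverse (s::real) / 2 * (2 * B * C / H) = (B * C / H) / s"
  by (cases "s = 0"; cases "H = 0") (simp_all add: field_simps)
lemma D_gen:
  fixes g :: "real \<Rightarrow> real"
  assumes dg: "(g has_real_derivative g') (at t)" and nz: "g t \<noteq> 0" and p: "1 - a^2/(g t)^2 > 0"
  shows "((\<lambda>x. sqrt (1 - a^2/(g x)^2)) has_real_derivative
          (a^2 * g' / (g t)^3) / sqrt (1 - a^2/(g t)^2)) (at t)"
proof -
  have d2: "((\<lambda>x. 1 - a^2/(g x)^2) has_real_derivative 2 * a^2 * g' / (g t)^3) (at t)"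
    using dg nz
    apply (auto intro!: derivative_eq_intros)
    apply (simp add: field_simps power2_eq_square power3_eq_cube power4_eq_xxxx)
    done
  have "((\<lambda>x. sqrt (1 - a^2/(g x)^2)) has_real_derivative inverse (sqrt (1 - a^2/(g t)^2)) / 2 * (2 * a^2 * g' / (g t)^3)) (at t)"
    using DERIV_chain[OF DERIV_real_sqrt[OF p] d2] by (simp add: o_def)
  moreover have "inverse (sqrt (1 - a^2/(g t)^2)) / 2 * (2 * a^2 * g' / (g t)^3) = (a^2 * g' / (g t)^3) / sqrt (1 - a^2/(g t)^2)"
    by (rule alg0)
  ultimately show ?thesis by (simp only:)
qed

lemma D_gam0:
  fixes a t :: real
  assumes "a < sin t" "0 < a"
  shows "((\<lambda>x. sqrt (1 - a^2/(sin x)^2)) has_real_derivative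
          (a^2 * cos t / (sin t)^3) / sqrt (1 - a^2/(sin t)^2)) (at t)"
proof -
  have s: "sin t > 0" using assms by simp
  have p: "1 - a^2/(sin t)^2 > 0" using assms s
    by (simp add: field_simps power_strict_mono)
  show ?thesis by (rule D_gen[OF DERIV_sin]) (use s p in auto)
qed

lemma D_ps0:
  fixes c t :: real
  assumes "\<bar>cos t / c\<bar> < 1" "0<c"
  shows "((\<lambda>x. arccos (cos x / c)) has_real_derivative sin t / (c * sqrt (1 - (cos t / c)^2))) (at t)"
proof -
  have a: "-1 < cos t / c" "cos t / c < 1" using assms(1) unfolding abs_less_iff by auto
  have d1: "(arccos has_real_derivative inverse (- sqrt (1 - (cos t / c)^2))) (at (cos t / c))"
    by (rule DERIV_arccos[OF a])
  have d2: "((\<lambda>x. cos x / c) has_real_derivative - sin t / c) (at t)"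
    using assms(2) by (auto intro!: derivative_eq_intros)
  have "((\<lambda>x. arccos (cos x / c)) has_real_derivative inverse (- sqrt (1 - (cos t / c)^2)) * (- sin t / c)) (at t)"
    using DERIV_chain[OF d1 d2] by (simp add: o_def)
  moreover have "inverse (- sqrt (1 - (cos t / c)^2)) * (- sin t / c) = sin t / (c * sqrt (1 - (cos t / c)^2))"
    by (simp add: divide_inverse inverse_mult_distrib mult_ac)
  ultimately show ?thesis by simp
qed

lemma alg1: fixes s r a c :: real shows "s \<noteq> 0 \<Longrightarrow> r \<noteq> 0 \<Longrightarrow> (a * c / s^3) / (r / s) = a * c / (s^2 * r)"
  by (simp add: field_simps power3_eq_cube power2_eq_square)
lemma alg2: fixes s r a :: real shows "s \<noteq> 0 \<Longrightarrow> r \<noteq> 0 \<Longrightarrow> r^2 = s^2 - a \<Longrightarrow> s / r - r / s = a / (s * r)"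
  by (simp add: field_simps power2_eq_square)
lemma alg3: fixes s r a c e :: real shows "s \<noteq> 0 \<Longrightarrow> r \<noteq> 0 \<Longrightarrow> a / (s^2 * r) * (s - e * c) = a / (s * r) - a * c / (s^2 * r) * e"
  by (simp add: field_simps power2_eq_square)
lemma alg4: fixes s r e K p phi :: real shows "s \<noteq> 0 \<Longrightarrow> r \<noteq> 0 \<Longrightarrow>
  2 * e - 2 * (K + p - phi) * (s / r) = 2 * s / r * (phi - (- e * (r / s) + K + p))"
  by (simp add: field_simps)

context
  fixes th1 :: real
  assumes th: "0 < th1" "th1 < pi/2"
begin

lemma a_pos: "sin th1 > 0" using th by (simp add: sin_gt_zero)
lemma c_pos: "cos th1 > 0" using th by (simp add: cos_gt_zero)

lemma sin_ge: assumes "th1 \<le> t" "t \<le> pi - th1" shows "sin th1 \<le> sin t"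
proof (cases "t \<le> pi/2")
  case True thus ?thesis using assms th by (intro sin_monotone_2pi_le) auto
next
  case False
  have "sin th1 \<le> sin (pi - t)" using assms th False by (intro sin_monotone_2pi_le) auto
  thus ?thesis by simp
qed

lemma sin_gt: assumes "th1 < t" "t < pi - th1" shows "sin th1 < sin t"
proof (cases "t \<le> pi/2")
  case True thus ?thesis using assms th by (intro sin_monotone_2pi) auto
next
  case False
  have "sin th1 < sin (pi - t)" using assms th False by (intro sin_monotone_2pi) auto
  thus ?thesis by simp
qed

lemma sin_pos: assumes "th1 \<le> t" "t \<le> pi - th1" shows "sin t > 0"
  using sin_ge[OF assms] a_pos by simp

lemma cos_sq_le: assumes "th1 \<le> t" "t \<le> pi - th1" shows "(cos t)^2 \<le> (cos th1)^2"
proof -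
  have "(sin th1)^2 \<le> (sin t)^2" using sin_ge[OF assms] a_pos by (intro power_mono) auto
  thus ?thesis using sin_cos_squared_add[of t] sin_cos_squared_add[of th1] by linarith
qed

lemma cos_sq_lt: assumes "th1 < t" "t < pi - th1" shows "(cos t)^2 < (cos th1)^2"
proof -
  have "(sin th1)^2 < (sin t)^2" using sin_gt[OF assms] a_pos by (intro power_strict_mono) auto
  thus ?thesis using sin_cos_squared_add[of t] sin_cos_squared_add[of th1] by linarith
qed

lemma cosq_le: assumes "th1 \<le> t" "t \<le> pi - th1" shows "\<bar>cos t / cos th1\<bar> \<le> 1"
proof -
  have "\<bar>cos t\<bar> \<le> \<bar>cos th1\<bar>" using cos_sq_le[OF assms] by (simp add: abs_le_square_iff)
  thus ?thesis using c_pos by (simp add: divide_le_eq_1 abs_divide)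
qed

lemma cosq_lt: assumes "th1 < t" "t < pi - th1" shows "\<bar>cos t / cos th1\<bar> < 1"
proof -
  have "\<bar>cos t\<bar>^2 < \<bar>cos th1\<bar>^2" using cos_sq_lt[OF assms] by simp
  hence "\<bar>cos t\<bar> < \<bar>cos th1\<bar>" by (rule power_less_imp_less_base) simp
  thus ?thesis using c_pos by (simp add: abs_divide)
qed

lemma gam_eq: assumes "th1 \<le> t" "t \<le> pi - th1" shows "gam th1 t = rr th1 t / sin t"
proof -
  have s: "sin t > 0" using sin_pos[OF assms] .
  have "1 - (sin th1)^2/(sin t)^2 = ((sin t)^2 - (sin th1)^2) / (sin t)^2" using s by (simp add: field_simps)
  thus ?thesis using s unfolding gam_def rr_def by (simp add: real_sqrt_divide)
qed

lemma sq_eq: assumes "th1 \<le> t" "t \<le> pi - th1" shows "sqrt (1 - (cos t / cos th1)^2) = rr th1 t / cos th1"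
proof -
  have c: "cos th1 > 0" by (rule c_pos)
  have "1 - (cos t / cos th1)^2 = ((sin t)^2 - (sin th1)^2) / (cos th1)^2"
    using c sin_cos_squared_add[of t] sin_cos_squared_add[of th1] by (simp add: field_simps)
  thus ?thesis using c unfolding rr_def by (simp add: real_sqrt_divide)
qed

lemma rr_pos: assumes "th1 < t" "t < pi - th1" shows "rr th1 t > 0"
  using sin_gt[OF assms] a_pos unfolding rr_def by (simp add: power_strict_mono)

lemma rr_lt: assumes "th1 \<le> t" "t \<le> pi - th1" shows "rr th1 t < sin t"
proof -
  have s: "sin t > 0" using sin_pos[OF assms] .
  have "(sin t)^2 - (sin th1)^2 < (sin t)^2" using a_pos by simp
  hence "sqrt ((sin t)^2 - (sin th1)^2) < sqrt ((sin t)^2)" by (simp only: real_sqrt_less_iff)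
  thus ?thesis using s unfolding rr_def by simp
qed

lemma rr_sq: assumes "th1 \<le> t" "t \<le> pi - th1" shows "(rr th1 t)^2 = (sin t)^2 - (sin th1)^2"
  using sin_ge[OF assms] a_pos unfolding rr_def by (simp add: power_mono)

lemma rr_nn: assumes "th1 \<le> t" "t \<le> pi - th1" shows "rr th1 t \<ge> 0"
  using sin_ge[OF assms] a_pos unfolding rr_def by (simp add: power_mono)

lemma gam_lt1: assumes "th1 \<le> t" "t \<le> pi - th1" shows "gam th1 t < 1" "0 \<le> gam th1 t"
  using gam_eq[OF assms] rr_lt[OF assms] sin_pos[OF assms] rr_nn[OF assms] by auto

lemma D_ps: assumes "th1 < t" "t < pi - th1"
  shows "(ps th1 has_real_derivative sin t / rr th1 t) (at t)"
proof -
  have "((\<lambda>x. arccos (cos x / cos th1)) has_real_derivative sin t / (cos th1 * sqrt (1 - (cos t / cos th1)^2))) (at t)"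
    by (rule D_ps0[OF cosq_lt[OF assms] c_pos])
  moreover have "sqrt (1 - (cos t / cos th1)^2) = rr th1 t / cos th1" using assms by (intro sq_eq) auto
  ultimately show ?thesis using c_pos unfolding ps_def[abs_def] by simp
qed

lemma D_gam: assumes "th1 < t" "t < pi - th1"
  shows "(gam th1 has_real_derivative (sin th1)^2 * cos t / ((sin t)^2 * rr th1 t)) (at t)"
proof -
  have t: "th1 \<le> t" "t \<le> pi - th1" using assms by auto
  have e: "sqrt (1 - (sin th1)^2/(sin t)^2) = rr th1 t / sin t" using gam_eq[OF t] unfolding gam_def .
  have "((\<lambda>x. sqrt (1 - (sin th1)^2/(sin x)^2)) has_real_derivative
          ((sin th1)^2 * cos t / (sin t)^3) / (rr th1 t / sin t)) (at t)"
    using D_gam0[OF sin_gt[OF assms] a_pos] unfolding e .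
  hence d: "(gam th1 has_real_derivative ((sin th1)^2 * cos t / (sin t)^3) / (rr th1 t / sin t)) (at t)"
    unfolding gam_def[abs_def] .
  have s: "sin t \<noteq> 0" using sin_pos[OF t] by simp
  have r: "rr th1 t \<noteq> 0" using rr_pos[OF assms] by simp
  have alg: "((sin th1)^2 * cos t / (sin t)^3) / (rr th1 t / sin t) = (sin th1)^2 * cos t / ((sin t)^2 * rr th1 t)"
    by (rule alg1[OF s r])
  show ?thesis using d unfolding alg .
qed

lemma D_F: assumes "th1 < t" "t < pi - th1"
  shows "(F th1 k has_real_derivative
     (sin th1)^2 / ((sin t)^2 * rr th1 t) * (sin t - (t + real k * pi) * cos t)) (at t)"
proof -
  have t: "th1 \<le> t" "t \<le> pi - th1" using assms by auto
  define D where "D = (sin th1)^2 * cos t / ((sin t)^2 * rr th1 t)"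
  have d1: "((\<lambda>x. x + real k * pi) has_real_derivative 1) (at t)" by (auto intro!: derivative_eq_intros)
  have dm: "((\<lambda>x. (x + real k * pi) * gam th1 x) has_real_derivative 1 * gam th1 t + D * (t + real k * pi)) (at t)"
    unfolding D_def by (rule DERIV_mult[OF d1 D_gam[OF assms]])
  have "((\<lambda>x. - ((x + real k * pi) * gam th1 x) + real k * pi + ps th1 x) has_real_derivative
     - (1 * gam th1 t + D * (t + real k * pi)) + 0 + sin t / rr th1 t) (at t)"
    by (intro DERIV_add DERIV_minus dm D_ps[OF assms] DERIV_const)
  moreover have "- (1 * gam th1 t + D * (t + real k * pi)) + 0 + sin t / rr th1 t
     = (sin th1)^2 / ((sin t)^2 * rr th1 t) * (sin t - (t + real k * pi) * cos t)"
  proof -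
    have s: "sin t > 0" using sin_pos[OF t] .
    have r: "rr th1 t > 0" using rr_pos[OF assms] .
    have q: "(rr th1 t)^2 = (sin t)^2 - (sin th1)^2" using rr_sq[OF t] .
    have e1: "sin t / rr th1 t - rr th1 t / sin t = (sin th1)^2 / (sin t * rr th1 t)"
      by (rule alg2) (use s r q in auto)
    have e2: "(sin th1)^2 / ((sin t)^2 * rr th1 t) * (sin t - (t + real k * pi) * cos t)
       = (sin th1)^2 / (sin t * rr th1 t) - D * (t + real k * pi)"
      unfolding D_def by (rule alg3) (use s r in auto)
    show ?thesis unfolding gam_eq[OF t] e2 e1[symmetric] by linarith
  qed
  moreover have "F th1 k = (\<lambda>x. - ((x + real k * pi) * gam th1 x) + real k * pi + ps th1 x)"
    by (rule ext) (simp add: F_def algebra_simps)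
  ultimately show ?thesis by simp
qed

lemma D_G: assumes "th1 < t" "t < pi - th1"
  shows "(G th1 k phi has_real_derivative 2 * sin t / rr th1 t * (phi - F th1 k t)) (at t)"
proof -
  have t: "th1 \<le> t" "t \<le> pi - th1" using assms by auto
  have "((\<lambda>x. (x + real k * pi)^2 - (real k * pi + ps th1 x - phi)^2) has_real_derivative
     2 * (t + real k * pi) - 2 * (real k * pi + ps th1 t - phi) * (sin t / rr th1 t)) (at t)"
    using D_ps[OF assms] by (auto intro!: derivative_eq_intros)
  moreover have "2 * (t + real k * pi) - 2 * (real k * pi + ps th1 t - phi) * (sin t / rr th1 t)
      = 2 * sin t / rr th1 t * (phi - F th1 k t)"
    unfolding F_def gam_eq[OF t] by (rule alg4) (use sin_pos[OF t] rr_pos[OF assms] in auto)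
  ultimately show ?thesis unfolding G_def[abs_def] by simp
qed

lemma cont_gam: "continuous_on {th1..pi-th1} (gam th1)"
proof -
  have nz: "\<forall>x\<in>{th1..pi-th1}. (sin x)^2 \<noteq> 0" using sin_pos by fastforce
  have c1: "continuous_on {th1..pi-th1} (\<lambda>x. (sin x)^2)"
    by (intro continuous_on_power continuous_on_sin continuous_on_id)
  have c2: "continuous_on {th1..pi-th1} (\<lambda>x. (sin th1)^2 / (sin x)^2)"
    by (rule continuous_on_divide[OF continuous_on_const c1 nz])
  have c3: "continuous_on {th1..pi-th1} (\<lambda>x. 1 - (sin th1)^2 / (sin x)^2)"
    by (rule continuous_on_diff[OF continuous_on_const c2])
  show ?thesis unfolding gam_def[abs_def] by (rule continuous_on_real_sqrt[OF c3])
qed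

lemma cont_ps: "continuous_on {th1..pi-th1} (ps th1)"
proof -
  have b: "\<And>x. x \<in> {th1..pi-th1} \<Longrightarrow> -1 \<le> cos x / cos th1 \<and> cos x / cos th1 \<le> 1"
    using cosq_le unfolding abs_le_iff by fastforce
  have nz: "\<forall>x\<in>{th1..pi-th1}. cos th1 \<noteq> 0" using c_pos by simp
  have c: "continuous_on {th1..pi-th1} (\<lambda>x. cos x / cos th1)"
    by (rule continuous_on_divide[OF continuous_on_cos[OF continuous_on_id] continuous_on_const nz])
  show ?thesis unfolding ps_def[abs_def] using continuous_on_arccos[OF c] b by blast
qed

lemma cont_F: "continuous_on {th1..pi-th1} (F th1 k)"
proof -
  have c1: "continuous_on {th1..pi-th1} (\<lambda>x. - (x + real k * pi))"
    by (intro continuous_on_minus continuous_on_add continuous_on_id continuous_on_const)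
  have "continuous_on {th1..pi-th1} (\<lambda>x. - (x + real k * pi) * gam th1 x + real k * pi + ps th1 x)"
    by (intro continuous_on_add continuous_on_mult' c1 cont_gam cont_ps continuous_on_const)
  moreover have "F th1 k = (\<lambda>x. - (x + real k * pi) * gam th1 x + real k * pi + ps th1 x)"
    by (rule ext) (simp only: F_def)
  ultimately show ?thesis by simp
qed

lemma cont_G: "continuous_on {th1..pi-th1} (G th1 k phi)"
proof -
  have "continuous_on {th1..pi-th1} (\<lambda>x. (x + real k * pi)^2 - (real k * pi + ps th1 x - phi)^2)"
    by (intro continuous_on_diff continuous_on_power continuous_on_add continuous_on_id
        continuous_on_const cont_ps)
  moreover have "G th1 k phi = (\<lambda>x. (x + real k * pi)^2 - (real k * pi + ps th1 x - phi)^2)"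
    by (rule ext) (simp only: G_def)
  ultimately show ?thesis by simp
qed

lemma F_end: "F th1 k (pi - th1) = real (k+1) * pi"
proof -
  have "gam th1 (pi - th1) = 0" unfolding gam_def using a_pos by simp
  moreover have "ps th1 (pi - th1) = pi" unfolding ps_def using c_pos by simp
  ultimately show ?thesis unfolding F_def by (simp add: algebra_simps)
qed

lemma tanx: assumes "0 < y" "y < s" "s < pi/2" shows "tan y - y < tan s - s"
proof -
  have cpos: "cos x > 0" if "y \<le> x" "x \<le> s" for x using that assms by (intro cos_gt_zero) auto
  show ?thesis
  proof (rule DERIV_pos_imp_increasing_open[of y s "\<lambda>x. tan x - x"])
    show "y < s" by fact
    fix x assume x: "y < x" "x < s"
    have c: "cos x > 0" using cpos x by auto
    have sx: "sin x > 0" using x assms by (intro sin_gt_zero) auto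
    have "(sin x)^2 > 0" using sx by simp
    hence "(cos x)^2 < 1" using sin_cos_squared_add[of x] by linarith
    hence "inverse ((cos x)^2) > 1" using c by (simp add: one_less_inverse)
    moreover have "((\<lambda>x. tan x - x) has_real_derivative inverse ((cos x)^2) - 1) (at x)"
      using c by (auto intro!: derivative_eq_intros)
    ultimately show "\<exists>y. ((\<lambda>x. tan x - x) has_real_derivative y) (at x) \<and> y > 0" by auto
  next
    have nz: "\<forall>x\<in>{y..s}. cos x \<noteq> 0" using cpos by (metis atLeastAtMost_iff less_irrefl)
    have "\<forall>x\<in>{y..s}. isCont (\<lambda>x. tan x - x) x"
      using nz by (auto intro!: continuous_intros isCont_tan)
    thus "continuous_on {y..s} (\<lambda>x. tan x - x)" by (rule continuous_at_imp_continuous_on)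
  qed
qed

lemma h_final:
  assumes "th1 \<le> y" "y < s" "s \<le> pi - th1" "sin y - (y + real k * pi) * cos y \<ge> 0"
  shows "sin s - (s + real k * pi) * cos s > 0"
proof (cases "cos s \<le> 0")
  case True
  have "sin s > 0" using sin_pos assms by auto
  moreover have "(s + real k * pi) * cos s \<le> 0" using True assms th by (intro mult_nonneg_nonpos) auto
  ultimately show ?thesis by linarith
next
  case False
  hence cs: "cos s > 0" by simp
  have s2: "s < pi/2"
  proof (rule ccontr)
    assume "\<not> s < pi/2"
    hence "0 \<le> pi - s" "pi - s \<le> pi/2" using assms th by auto
    hence "cos (pi - s) \<ge> 0" by (intro cos_ge_zero) auto
    thus False using cs by simp
  qed
  have cy: "cos y > 0" using assms th s2 by (intro cos_gt_zero) auto
  have "tan y \<ge> y + real k * pi" using assms(4) cy by (simp add: tan_def le_divide_eq)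
  moreover have "tan y - y < tan s - s" using tanx[of y s] assms th s2 by auto
  ultimately have "tan s > s + real k * pi" by linarith
  thus ?thesis using cs by (simp add: tan_def less_divide_eq)
qed

lemma F_incr:
  assumes "th1 \<le> y" "y < s" "s \<le> pi - th1"
    and "\<And>x. y < x \<Longrightarrow> x < s \<Longrightarrow> sin x - (x + real k * pi) * cos x > 0"
  shows "F th1 k y < F th1 k s"
proof (rule DERIV_pos_imp_increasing_open[OF assms(2)])
  fix x assume x: "y < x" "x < s"
  have x': "th1 < x" "x < pi - th1" using x assms by auto
  have "(sin th1)^2 / ((sin x)^2 * rr th1 x) > 0" using a_pos sin_gt[OF x'] rr_pos[OF x'] by simp
  hence "(sin th1)^2 / ((sin x)^2 * rr th1 x) * (sin x - (x + real k * pi) * cos x) > 0"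
    using assms(4)[OF x] by (intro mult_pos_pos)
  thus "\<exists>d. (F th1 k has_real_derivative d) (at x) \<and> d > 0" using D_F[OF x'] by blast
next
  show "continuous_on {y..s} (F th1 k)" by (rule continuous_on_subset[OF cont_F]) (use assms in auto)
qed

lemma F_decr:
  assumes "th1 \<le> y" "y < s" "s \<le> pi - th1"
    and "\<And>x. y < x \<Longrightarrow> x < s \<Longrightarrow> sin x - (x + real k * pi) * cos x < 0"
  shows "F th1 k y > F th1 k s"
proof (rule DERIV_neg_imp_decreasing_open[OF assms(2)])
  fix x assume x: "y < x" "x < s"
  have x': "th1 < x" "x < pi - th1" using x assms by auto
  have "(sin th1)^2 / ((sin x)^2 * rr th1 x) > 0" using a_pos sin_gt[OF x'] rr_pos[OF x'] by simp
  hence "(sin th1)^2 / ((sin x)^2 * rr th1 x) * (sin x - (x + real k * pi) * cos x) < 0"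
    using assms(4)[OF x] by (intro mult_pos_neg)
  thus "\<exists>d. (F th1 k has_real_derivative d) (at x) \<and> d < 0" using D_F[OF x'] by blast
next
  show "continuous_on {y..s} (F th1 k)" by (rule continuous_on_subset[OF cont_F]) (use assms in auto)
qed

lemma SS_pos: assumes "th1 \<le> t" "t \<le> pi - th1" shows "SS th1 k t > 0"
proof -
  have "real k * pi \<ge> 0" by simp
  hence "t + real k * pi > 0" using assms th by linarith
  thus ?thesis unfolding SS_def using a_pos sin_pos[OF assms] by simp
qed

lemma G_sol: assumes "th1 \<le> t" "t \<le> pi - th1" "F th1 k t = phi"
  shows "G th1 k phi t = (SS th1 k t)^2"
proof -
  have x: "real k * pi + ps th1 t - phi = (t + real k * pi) * gam th1 t"
    using assms(3) unfolding F_def by (simp add: algebra_simps)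
  have s: "sin t > 0" using sin_pos[OF assms(1,2)] .
  have "1 - (sin th1)^2/(sin t)^2 \<ge> 0" using sin_ge[OF assms(1,2)] a_pos s
    by (simp add: field_simps power_mono)
  hence g2: "(gam th1 t)^2 = 1 - (sin th1)^2/(sin t)^2" unfolding gam_def by simp
  have "(t + real k * pi)^2 - ((t + real k * pi) * gam th1 t)^2 = (t + real k * pi)^2 * (1 - (gam th1 t)^2)"
    by (simp add: power_mult_distrib right_diff_distrib)
  also have "\<dots> = (t + real k * pi)^2 * ((sin th1)^2/(sin t)^2)" using g2 by simp
  also have "\<dots> = (SS th1 k t)^2" unfolding SS_def by (simp add: power_divide power_mult_distrib)
  finally show ?thesis unfolding G_def x .
qed

lemma same:
  assumes "th1 \<le> p" "p < q" "q \<le> pi - th1" "F th1 k p = phi" "F th1 k q = phi"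
  shows "SS th1 k p < SS th1 k q"
proof -
  have below: "F th1 k x < phi" if x: "p < x" "x < q" for x
  proof (cases "sin x - (x + real k * pi) * cos x \<ge> 0")
    case True
    have "F th1 k x < F th1 k q"
      by (rule F_incr) (use x assms True h_final[of x _ k] in auto)
    thus ?thesis using assms by simp
  next
    case False
    have "F th1 k p > F th1 k x"
    proof (rule F_decr)
      fix z assume z: "p < z" "z < x"
      show "sin z - (z + real k * pi) * cos z < 0"
      proof (rule ccontr)
        assume "\<not> ?thesis"
        hence "sin x - (x + real k * pi) * cos x > 0" using h_final[of z x k] z x assms by auto
        thus False using False by simp
      qed
    qed (use x assms in auto)
    thus ?thesis using assms by simp
  qed
  have "G th1 k phi p < G th1 k phi q"
  proof (rule DERIV_pos_imp_increasing_open[OF assms(2)])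
    fix x assume x: "p < x" "x < q"
    have x': "th1 < x" "x < pi - th1" using x assms by auto
    have "2 * sin x / rr th1 x * (phi - F th1 k x) > 0"
      using sin_gt[OF x'] a_pos rr_pos[OF x'] below[OF x] by simp
    thus "\<exists>d. (G th1 k phi has_real_derivative d) (at x) \<and> d > 0" using D_G[OF x'] by blast
  next
    show "continuous_on {p..q} (G th1 k phi)" by (rule continuous_on_subset[OF cont_G]) (use assms in auto)
  qed
  hence "(SS th1 k p)^2 < (SS th1 k q)^2"
    using G_sol[of p k phi] G_sol[of q k phi] assms by auto
  thus ?thesis by (rule power_less_imp_less_base) (use SS_pos[of q k] assms in auto)
qed

lemma psi_mono: assumes "th1 \<le> y" "y \<le> s" "s \<le> pi - th1"
  shows "s - y \<le> ps th1 s - ps th1 y"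
proof -
  have "ps th1 y - y \<le> ps th1 s - s"
  proof (rule DERIV_nonneg_imp_increasing_open[OF assms(2)])
    fix x assume x: "y < x" "x < s"
    have x': "th1 < x" "x < pi - th1" using x assms by auto
    have "sin x / rr th1 x \<ge> 1" using rr_lt[of x] rr_pos[OF x'] x' by simp
    moreover have "((\<lambda>x. ps th1 x - x) has_real_derivative sin x / rr th1 x - 1) (at x)"
      using D_ps[OF x'] by (auto intro!: derivative_eq_intros)
    ultimately show "\<exists>d. ((\<lambda>x. ps th1 x - x) has_real_derivative d) (at x) \<and> d \<ge> 0" by auto
  next
    have "continuous_on {y..s} (ps th1)" by (rule continuous_on_subset[OF cont_ps]) (use assms in auto)
    thus "continuous_on {y..s} (\<lambda>x. ps th1 x - x)" by (intro continuous_intros)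
  qed
  thus ?thesis by simp
qed

lemma ps_bounds: assumes "th1 \<le> t" "t \<le> pi - th1" shows "0 \<le> ps th1 t" "ps th1 t \<le> pi"
proof -
  have b: "-1 \<le> cos t / cos th1" "cos t / cos th1 \<le> 1" using cosq_le[OF assms] unfolding abs_le_iff by auto
  show "0 \<le> ps th1 t" "ps th1 t \<le> pi" unfolding ps_def using arccos_lbound[OF b] arccos_ubound[OF b] by auto
qed

lemma easy:
  assumes "k < k'" "th1 \<le> tq" "tq \<le> tp" "tp \<le> pi - th1"
    and "F th1 k tp = phi" "F th1 k' tq = phi"
  shows "SS th1 k tp < SS th1 k' tq"
proof -
  define eP where "eP = tp + real k * pi"
  define xP where "xP = real k * pi + ps th1 tp - phi"
  define eQ where "eQ = tq + real k' * pi"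
  define xQ where "xQ = real k' * pi + ps th1 tq - phi"
  have tp: "th1 \<le> tp" "tp \<le> pi - th1" using assms by auto
  have tq: "th1 \<le> tq" "tq \<le> pi - th1" using assms by auto
  have GP: "(SS th1 k tp)^2 = (eP - xP) * (eP + xP)"
    using G_sol[OF tp assms(5)] unfolding G_def eP_def xP_def by (simp add: algebra_simps power2_eq_square)
  have GQ: "(SS th1 k' tq)^2 = (eQ - xQ) * (eQ + xQ)"
    using G_sol[OF tq assms(6)] unfolding G_def eQ_def xQ_def by (simp add: algebra_simps power2_eq_square)
  have xPe: "xP = eP * gam th1 tp" using assms(5) unfolding F_def xP_def eP_def by (simp add: algebra_simps)
  have "real k * pi \<ge> 0" by simp
  hence eP0: "eP > 0" unfolding eP_def using tp th by linarith
  have d1: "eP - xP > 0" using xPe eP0 gam_lt1[OF tp] by (simp add: algebra_simps)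
  have pm: "tp - tq \<le> ps th1 tp - ps th1 tq" by (rule psi_mono) (use assms in auto)
  have d2: "eQ - xQ \<ge> eP - xP" using pm unfolding eP_def xP_def eQ_def xQ_def by linarith
  have kk: "real k' \<ge> real k + 1" using assms(1) by simp
  hence kk': "real k' * pi \<ge> real k * pi + pi" using mult_right_mono[OF kk, of pi]
    by (simp add: distrib_right)
  have s1: "eP + xP \<ge> 0" using xPe eP0 gam_lt1[OF tp] by simp
  have s2: "eQ + xQ > eP + xP"
    using kk' ps_bounds[OF tp] ps_bounds[OF tq] assms th unfolding eP_def xP_def eQ_def xQ_def by linarith
  have "(eP - xP) * (eP + xP) < (eP - xP) * (eQ + xQ)" using d1 s2 by simp
  also have "\<dots> \<le> (eQ - xQ) * (eQ + xQ)" using d2 s1 s2 by (intro mult_right_mono) auto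
  finally have "(SS th1 k tp)^2 < (SS th1 k' tq)^2" using GP GQ by simp
  thus ?thesis by (rule power_less_imp_less_base) (use SS_pos[OF tq, of k'] in auto)
qed

lemma F_shift: "F th1 k' t - F th1 k t = (real k' - real k) * pi * (1 - gam th1 t)"
  unfolding F_def by (simp add: algebra_simps)

lemma cross:
  assumes "k < k'" "th1 \<le> tp" "tp \<le> pi - th1" "th1 \<le> tq" "tq \<le> pi - th1"
    and "F th1 k tp = phi" "F th1 k' tq = phi" "phi \<le> pi"
  shows "SS th1 k tp < SS th1 k' tq"
proof (cases "tq \<le> tp")
  case True thus ?thesis using easy assms by blast
next
  case False
  have "(real k' - real k) * pi * (1 - gam th1 tq) > 0"
    using assms(1) gam_lt1[OF assms(4,5)] by simp
  hence lt: "F th1 k tq < phi" using F_shift[of k' tq k] assms by linarith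
  have "pi \<le> real (k+1) * pi" using mult_right_mono[of 1 "real (k+1)" pi] by simp
  hence ge: "phi \<le> F th1 k (pi - th1)" using F_end[of k] assms(8) by linarith
  have c: "continuous_on {tq..pi-th1} (F th1 k)" by (rule continuous_on_subset[OF cont_F]) (use assms in auto)
  obtain t' where t': "tq \<le> t'" "t' \<le> pi - th1" "F th1 k t' = phi"
    using IVT'[of "F th1 k" tq phi "pi - th1", OF less_imp_le[OF lt] ge assms(5) c] by blast
  have "t' \<noteq> tq" using t' lt by auto
  hence "tp < t'" using t' False by auto
  hence "SS th1 k tp < SS th1 k t'" using same[of tp t' k phi] assms t' by auto
  also have "\<dots> < SS th1 k' tq" using easy[of k k' tq t' phi] assms t' by auto
  finally show ?thesis .
qed

lemma idx_eq: assumes "eta \<in> Ik th1 k" shows "idx th1 eta = k"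
  unfolding idx_def
proof (rule the_equality)
  show "eta \<in> Ik th1 k" by fact
next
  fix j assume j: "eta \<in> Ik th1 j"
  have jj: "th1 + real j * pi \<le> eta" "eta \<le> real (j+1) * pi - th1"
    using j unfolding Ik_def by (simp_all only: atLeastAtMost_iff)
  have kk: "th1 + real k * pi \<le> eta" "eta \<le> real (k+1) * pi - th1"
    using assms unfolding Ik_def by (simp_all only: atLeastAtMost_iff)
  have "real j * pi < real (k+1) * pi" using jj kk th by linarith
  hence "real j < real (k+1)" using pi_gt_zero by (simp only: mult_less_cancel_right_pos)
  hence 1: "j < k + 1" by (simp only: of_nat_less_iff)
  have "real k * pi < real (j+1) * pi" using jj kk th by linarith
  hence "real k < real (j+1)" using pi_gt_zero by (simp only: mult_less_cancel_right_pos)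
  hence 2: "k < j + 1" by (simp only: of_nat_less_iff)
  show "j = k" using 1 2 by simp
qed

lemma conn:
  assumes "eta \<in> Ik th1 k"
  shows "th1 \<le> eta - real k * pi" "eta - real k * pi \<le> pi - th1"
    "Phi th1 eta = F th1 k (eta - real k * pi)" "S th1 eta = SS th1 k (eta - real k * pi)"
proof -
  define t where "t = eta - real k * pi"
  have e: "eta = t + real k * pi" unfolding t_def by simp
  show t1: "th1 \<le> eta - real k * pi" "eta - real k * pi \<le> pi - th1"
    using assms unfolding Ik_def by (auto simp: algebra_simps)
  have sn: "sin eta = (-1)^k * sin t" unfolding e by (simp add: sin_add)
  have ab: "\<bar>sin eta\<bar> = \<bar>sin t\<bar>" unfolding sn by (simp add: abs_mult power_abs)
  have sq: "(sin eta)^2 = (sin t)^2" by (metis ab power2_abs)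
  have g: "gam th1 eta = gam th1 t" unfolding gam_def sq ..
  show "Phi th1 eta = F th1 k (eta - real k * pi)"
    unfolding Phi_def Let_def idx_eq[OF assms] F_def ps_def t_def[symmetric] g
    unfolding e by simp
  have "sin t > 0" using sin_pos t1 unfolding t_def by auto
  hence "\<bar>sin eta\<bar> = sin t" using ab by simp
  thus "S th1 eta = SS th1 k (eta - real k * pi)"
    unfolding S_def SS_def t_def[symmetric] e by simp
qed

end

theorem proposition5p76:
  fixes th1 phi1 eta eta' :: real
  assumes "0 < th1" "th1 < pi / 2"
    and "0 \<le> phi1" "phi1 \<le> pi"
    and "eta \<in> Iall th1" "eta' \<in> Iall th1"
    and "eta < eta'"
    and "Phi th1 eta = phi1" "Phi th1 eta' = phi1"
  shows "S th1 eta < S th1 eta'"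
proof -
  obtain k where k: "eta \<in> Ik th1 k" using assms(5) unfolding Iall_def by auto
  obtain k' where k': "eta' \<in> Ik th1 k'" using assms(6) unfolding Iall_def by auto
  note c = conn[OF assms(1,2) k]
  note c' = conn[OF assms(1,2) k']
  consider "k = k'" | "k < k'" | "k' < k" by linarith
  then show ?thesis
  proof cases
    case 1
    show ?thesis unfolding c(4) c'(4) unfolding 1
      by (rule same[OF assms(1,2)]) (use c c' assms 1 in auto)
  next
    case 2
    show ?thesis unfolding c(4) c'(4)
      by (rule cross[OF assms(1,2) 2]) (use c c' assms in auto)
  next
    case 3
    hence "real k \<ge> real k' + 1" by simp
    hence "real k * pi \<ge> (real k' + 1) * pi" by (intro mult_right_mono) auto
    moreover have "th1 + real k * pi \<le> eta" "eta' \<le> real (k'+1) * pi - th1"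
      using k k' unfolding Ik_def by auto
    ultimately have "eta' < eta" using assms(1) by (simp add: algebra_simps)
    thus ?thesis using assms(7) by simp
  qed
qed

end
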